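(* For $n\ge 2$, the star $K_{1,n}$ satisfies $\nu^*(K_{1,n})=\frac{5n^2+n}{2}$.
   Context: For a finite simple graph $G=(V,E)$ with $\ell=|V|+|E|$, a construction sequence (c-sequence) is a bijection $x:\{1,\dots,\ell\}\to V\sqcup E$ such that every edge $e=uw$ satisfies $x^{-1}(e)>\max\{x^{-1}(u),x^{-1}(w)\}$. The cost of $x$ is $\nu(x)=\sum_{e=uw\in E}\big(2x^{-1}(e)-x^{-1}(u)-x^{-1}(w)\big)$, and $\nu^*(G)$ is the maximum of $\nu(x)$ over all c-sequences for $G$. $K_{1,n}$ is the star with one hub vertex adjacent to $n$ leaves. *)

theory Defs
  imports Complex_Main
begin

definition simple_graph :: "'a set \<Rightarrow> 'a set set \<Rightarrow> bool" where
  "simple_graph V E \<longleftrightarrow> finite V \<and> (\<forall>e\<in>E. e \<subseteq> V \<and> card e = 2)"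

definition elems :: "'a set \<Rightarrow> 'a set set \<Rightarrow> ('a + 'a set) set" where
  "elems V E = Inl ` V \<union> Inr ` E"

definition pos :: "'a set \<Rightarrow> 'a set set \<Rightarrow> (nat \<Rightarrow> 'a + 'a set) \<Rightarrow> ('a + 'a set) \<Rightarrow> nat" where
  "pos V E x z = the_inv_into {1..card V + card E} x z"

definition cseq :: "'a set \<Rightarrow> 'a set set \<Rightarrow> (nat \<Rightarrow> 'a + 'a set) \<Rightarrow> bool" where
  "cseq V E x \<longleftrightarrow> bij_betw x {1..card V + card E} (elems V E) \<and>
     (\<forall>e\<in>E. \<forall>u\<in>e. pos V E x (Inr e) > pos V E x (Inl u))"

definition cost :: "'a set \<Rightarrow> 'a set set \<Rightarrow> (nat \<Rightarrow> 'a + 'a set) \<Rightarrow> int" where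
  "cost V E x = (\<Sum>e\<in>E. 2 * int (pos V E x (Inr e)) - (\<Sum>u\<in>e. int (pos V E x (Inl u))))"

definition nu_star :: "'a set \<Rightarrow> 'a set set \<Rightarrow> int" where
  "nu_star V E = Max {cost V E x | x. cseq V E x}"

definition star_V :: "nat \<Rightarrow> nat set" where
  "star_V n = {0..n}"

definition star_E :: "nat \<Rightarrow> nat set set" where
  "star_E n = {{0, i} | i. i \<in> {1..n}}"

end

theory Submission
  imports Defs
begin

lemma sum_distinct_lb:
  fixes A :: "nat set"
  shows "finite A \<Longrightarrow> 0 \<notin> A \<Longrightarrow> card A * (card A + 1) \<le> 2 * \<Sum>A"
proof (induction "card A" arbitrary: A)
  case 0
  then show ?case by simp
next
  case (Suc k)
  then have ne: "A \<noteq> {}" by auto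
  define m where "m = Max A"
  have mA: "m \<in> A" using Max_in[OF Suc.prems(1) ne] m_def by simp
  have cA: "card (A - {m}) = k" using Suc.hyps(2) mA Suc.prems(1) by simp
  have IH: "k * (k + 1) \<le> 2 * \<Sum>(A - {m})"
    using Suc.hyps(1)[of "A - {m}"] cA Suc.prems by simp
  have sub: "A \<subseteq> {1..m}" using Suc.prems m_def Max_ge[OF Suc.prems(1)]
    by (auto simp: Suc_le_eq) (metis gr0I)
  have "card A \<le> m" using card_mono[OF _ sub] by simp
  then have "Suc k \<le> m" using Suc.hyps(2) by simp
  moreover have "\<Sum>A = \<Sum>(A - {m}) + m" using mA Suc.prems(1)
    by (simp add: sum.remove)
  ultimately show ?case using IH Suc.hyps(2)[symmetric] by (simp add: algebra_simps)
qed

lemma gauss2: "2 * \<Sum>{1..(m::nat)} = m * (m + 1)"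
  by (induction m) (auto simp: algebra_simps)

lemma starE_img: "star_E n = (\<lambda>i. {0, i}) ` {1..n}"
  unfolding star_E_def by auto

lemma inj_pair: "inj_on (\<lambda>i::nat. {0, i}) {1..n}"
  by (auto simp: inj_on_def doubleton_eq_iff)

lemma card_E: "card (star_E n) = n"
  unfolding starE_img using card_image[OF inj_pair] by simp

lemma card_V: "card (star_V n) = n + 1"
  unfolding star_V_def by simp

lemma cost_star:
  "cost (star_V n) (star_E n) x =
    (\<Sum>i\<in>{1..n}. 2 * int (pos (star_V n) (star_E n) x (Inr {0, i}))
        - int (pos (star_V n) (star_E n) x (Inl 0)) - int (pos (star_V n) (star_E n) x (Inl i)))"
  unfolding cost_def starE_img
  by (subst sum.reindex[OF inj_pair]) (auto intro!: sum.cong)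


lemma elems_star: "elems (star_V n) (star_E n) = Inl ` {0..n} \<union> Inr ` ((\<lambda>i. {0, i}) ` {1..n})"
  unfolding elems_def star_V_def starE_img by simp

lemma pos_bij:
  assumes "cseq V E x"
  shows "bij_betw (pos V E x) (elems V E) {1..card V + card E}"
  using assms unfolding cseq_def pos_def by (simp add: bij_betw_the_inv_into)

lemma upper:
  assumes "cseq (star_V n) (star_E n) x" and "n \<ge> 1"
  shows "2 * cost (star_V n) (star_E n) x \<le> 5 * int n ^ 2 + int n"
proof -
  define P where "P = pos (star_V n) (star_E n) x"
  define N where "N = 2 * n + 1"
  have bij: "bij_betw P (elems (star_V n) (star_E n)) {1..N}"
    using pos_bij[OF assms(1)] unfolding P_def N_def card_V card_E by (simp add: mult_2)
  have inj: "inj_on P (elems (star_V n) (star_E n))" using bij bij_betw_imp_inj_on by blast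
  have T: "(\<Sum>z\<in>elems (star_V n) (star_E n). P z) = \<Sum>{1..N}"
    using sum.reindex_bij_betw[OF bij, of id] by simp
  have disj: "Inl ` {0..n} \<inter> Inr ` ((\<lambda>i. {0, i}) ` {1..n}) = ({} :: (nat + nat set) set)"
    by auto
  have "(\<Sum>z\<in>elems (star_V n) (star_E n). P z)
      = (\<Sum>z\<in>Inl ` {0..n}. P z) + (\<Sum>z\<in>Inr ` ((\<lambda>i. {0, i}) ` {1..n}). P z)"
    unfolding elems_star by (rule sum.union_disjoint) (use disj in auto)
  also have "(\<Sum>z\<in>Inl ` {0..n}. P z) = (\<Sum>i\<in>{0..n}. P (Inl i))"
    by (subst sum.reindex) (auto simp: inj_on_def)
  also have "(\<Sum>z\<in>Inr ` ((\<lambda>i. {0, i}) ` {1..n}). P z) = (\<Sum>i\<in>{1..n}. P (Inr {0, i}))"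
    by (subst sum.reindex, simp add: inj_on_def, subst sum.reindex[OF inj_pair]) simp
  finally have sumeq: "(\<Sum>i\<in>{0..n}. P (Inl i)) + (\<Sum>i\<in>{1..n}. P (Inr {0, i})) = \<Sum>{1..N}"
    using T by simp
  have Tg: "2 * \<Sum>{1..N} = N * (N + 1)" by (rule gauss2)
  have sub: "Inl ` {0..n} \<subseteq> elems (star_V n) (star_E n)" unfolding elems_star by auto
  have injA: "inj_on P (Inl ` {0..n})" using inj_on_subset[OF inj sub] .
  have cardA: "card (P ` Inl ` {0..n}) = n + 1"
    using card_image[OF injA] by (simp add: card_image inj_on_def)
  have A0: "0 \<notin> P ` Inl ` {0..n}"
    using sub bij unfolding bij_betw_def by fastforce
  have "(n + 1) * (n + 2) \<le> 2 * \<Sum>(P ` Inl ` {0..n})"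
    using sum_distinct_lb[of "P ` Inl ` {0..n}"] cardA A0 by simp
  also have "\<Sum>(P ` Inl ` {0..n}) = (\<Sum>z\<in>Inl ` {0..n}. P z)"
    using sum.reindex[OF injA, of id] by simp
  also have "\<dots> = (\<Sum>i\<in>{0..n}. P (Inl i))"
    by (subst sum.reindex) (auto simp: inj_on_def)
  finally have Alb: "(n + 1) * (n + 2) \<le> 2 * (\<Sum>i\<in>{0..n}. P (Inl i))" .
  have "Inl 0 \<in> elems (star_V n) (star_E n)" using sub by auto
  then have "P (Inl 0) \<in> {1..N}" using bij unfolding bij_betw_def by blast
  then have a0: "1 \<le> P (Inl 0)" by simp
  have split0: "(\<Sum>i\<in>{0..n}. P (Inl i)) = P (Inl 0) + (\<Sum>i\<in>{1..n}. P (Inl i))"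
    by (simp add: sum.atLeast_Suc_atMost)
  have c: "cost (star_V n) (star_E n) x =
     2 * int (\<Sum>i\<in>{1..n}. P (Inr {0, i})) - int n * int (P (Inl 0)) - int (\<Sum>i\<in>{1..n}. P (Inl i))"
    unfolding cost_star P_def[symmetric] by (simp add: sum_subtractf sum_distrib_left of_nat_sum)
  define a where "a = int (P (Inl 0))"
  define B where "B = int (\<Sum>i\<in>{1..n}. P (Inr {0, i}))"
  define L where "L = int (\<Sum>i\<in>{1..n}. P (Inl i))"
  have e1: "a + L + B = int (\<Sum>{1..N})" 
  proof -
    have "P (Inl 0) + (\<Sum>i\<in>{1..n}. P (Inl i)) + (\<Sum>i\<in>{1..n}. P (Inr {0, i})) = \<Sum>{1..N}"
      using sumeq split0 by simp
    then show ?thesis unfolding a_def B_def L_def by (metis of_nat_add)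
  qed
  have e2: "2 * int (\<Sum>{1..N}) = int N * (int N + 1)" using Tg by (metis of_nat_1 of_nat_add of_nat_mult of_nat_numeral)
  have e3: "(int n + 1) * (int n + 2) \<le> 2 * (a + L)" using Alb split0 unfolding a_def L_def
    by (metis (mono_tags, lifting) of_nat_1 of_nat_add of_nat_le_iff of_nat_mult of_nat_numeral)
  have e4: "(int n - 1) * a \<ge> int n - 1"
  proof -
    have "0 \<le> (int n - 1) * (int (P (Inl 0)) - 1)" using a0 assms(2) by (intro mult_nonneg_nonneg) auto
    then show ?thesis unfolding a_def by (simp add: algebra_simps)
  qed
  have cc: "cost (star_V n) (star_E n) x = 2 * B - int n * a - L" using c unfolding a_def B_def L_def .
  have NN: "int N = 2 * int n + 1" unfolding N_def by simp
  show ?thesis using e1 e2 e3 e4 cc NN by (simp add: algebra_simps power2_eq_square)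
qed


lemma cost_nonneg:
  assumes "cseq (star_V n) (star_E n) x"
  shows "0 \<le> cost (star_V n) (star_E n) x"
proof -
  have "0 \<le> 2 * int (pos (star_V n) (star_E n) x (Inr {0, i}))
        - int (pos (star_V n) (star_E n) x (Inl 0)) - int (pos (star_V n) (star_E n) x (Inl i))"
    if "i \<in> {1..n}" for i
  proof -
    have "{0, i} \<in> star_E n" using that unfolding starE_img by auto
    then have "pos (star_V n) (star_E n) x (Inr {0, i}) > pos (star_V n) (star_E n) x (Inl 0)"
      "pos (star_V n) (star_E n) x (Inr {0, i}) > pos (star_V n) (star_E n) x (Inl i)"
      using assms unfolding cseq_def by auto
    then show ?thesis by linarith
  qed
  then show ?thesis unfolding cost_star by (intro sum_nonneg) auto
qed

definition x0 :: "nat \<Rightarrow> nat \<Rightarrow> nat + nat set" where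
  "x0 n k = (if k = 1 then Inl 0 else if k \<le> n + 1 then Inl (k - 1) else Inr {0, k - n - 1})"

definition q0 :: "nat \<Rightarrow> nat + nat set \<Rightarrow> nat" where
  "q0 n z = (case z of Inl v \<Rightarrow> v + 1 | Inr e \<Rightarrow> n + 1 + Max e)"

lemma max_pair: "Max {0, i::nat} = i" by simp

lemma x0_bij: "bij_betw (x0 n) {1..card (star_V n) + card (star_E n)} (elems (star_V n) (star_E n))"
  unfolding card_V card_E elems_star
proof (rule bij_betw_byWitness[where f' = "q0 n"])
  show "\<forall>a\<in>{1..n + 1 + n}. q0 n (x0 n a) = a"
  proof
    fix a assume a: "a \<in> {1..n + 1 + n}"
    show "q0 n (x0 n a) = a"
    proof (cases "a \<le> n + 1")
      case True
      then show ?thesis using a by (auto simp: x0_def q0_def)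
    next
      case False
      then have "x0 n a = Inr {0, a - n - 1}" by (simp add: x0_def)
      then show ?thesis using False by (simp add: q0_def max_pair)
    qed
  qed
  show "\<forall>a'\<in>Inl ` {0..n} \<union> Inr ` (\<lambda>i. {0, i}) ` {1..n}. x0 n (q0 n a') = a'"
  proof
    fix z assume "z \<in> Inl ` {0..n} \<union> Inr ` (\<lambda>i. {0, i}) ` {1..n}"
    then consider v where "v \<in> {0..n}" "z = Inl v" | i where "i \<in> {1..n}" "z = Inr {0, i}" by blast
    then show "x0 n (q0 n z) = z"
    proof cases
      case 1 then show ?thesis by (auto simp: x0_def q0_def)
    next
      case 2
      then have "q0 n z = n + 1 + i" by (simp add: q0_def max_pair)
      then show ?thesis using 2 by (simp add: x0_def)
    qed
  qed
  show "x0 n ` {1..n + 1 + n} \<subseteq> Inl ` {0..n} \<union> Inr ` (\<lambda>i. {0, i}) ` {1..n}"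
  proof
    fix z assume "z \<in> x0 n ` {1..n + 1 + n}"
    then obtain a where a: "a \<in> {1..n + 1 + n}" "z = x0 n a" by blast
    show "z \<in> Inl ` {0..n} \<union> Inr ` (\<lambda>i. {0, i}) ` {1..n}"
    proof (cases "a \<le> n + 1")
      case True
      then show ?thesis using a by (auto simp: x0_def)
    next
      case False
      then have "z = Inr {0, a - n - 1}" "a - n - 1 \<in> {1..n}" using a by (auto simp: x0_def)
      then show ?thesis by blast
    qed
  qed
  show "q0 n ` (Inl ` {0..n} \<union> Inr ` (\<lambda>i. {0, i}) ` {1..n}) \<subseteq> {1..n + 1 + n}"
    by (auto simp: q0_def max_pair)
qed

lemma pos_x0:
  assumes "z \<in> elems (star_V n) (star_E n)"
  shows "pos (star_V n) (star_E n) (x0 n) z = q0 n z"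
proof -
  have b: "bij_betw (x0 n) {1..card (star_V n) + card (star_E n)} (elems (star_V n) (star_E n))"
    by (rule x0_bij)
  have qin: "q0 n z \<in> {1..card (star_V n) + card (star_E n)}" and xq: "x0 n (q0 n z) = z"
    using assms unfolding card_V card_E elems_star by (auto simp: x0_def q0_def)
  show ?thesis unfolding pos_def using the_inv_into_f_f[OF bij_betw_imp_inj_on[OF b] qin] xq by simp
qed

lemma x0_cseq: "cseq (star_V n) (star_E n) (x0 n)"
  unfolding cseq_def
proof (intro conjI ballI)
  show "bij_betw (x0 n) {1..card (star_V n) + card (star_E n)} (elems (star_V n) (star_E n))"
    by (rule x0_bij)
next
  fix e u assume e: "e \<in> star_E n" and u: "u \<in> e"
  then obtain i where i: "i \<in> {1..n}" "e = {0, i}" unfolding starE_img by auto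
  have "Inr e \<in> elems (star_V n) (star_E n)" "Inl u \<in> elems (star_V n) (star_E n)"
    using i u unfolding elems_star by auto
  then show "pos (star_V n) (star_E n) (x0 n) (Inl u) < pos (star_V n) (star_E n) (x0 n) (Inr e)"
    using i u by (auto simp: pos_x0 q0_def)
qed

lemma x0_cost: "2 * cost (star_V n) (star_E n) (x0 n) = 5 * int n ^ 2 + int n"
proof -
  have "cost (star_V n) (star_E n) (x0 n) = (\<Sum>i\<in>{1..n}. 2 * int n + int i)"
    unfolding cost_star
  proof (rule sum.cong)
    fix i assume i: "i \<in> {1..n}"
    have "Inr {0, i} \<in> elems (star_V n) (star_E n)" "Inl 0 \<in> elems (star_V n) (star_E n)"
      "Inl i \<in> elems (star_V n) (star_E n)"
      using i unfolding elems_star by auto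
    then show "2 * int (pos (star_V n) (star_E n) (x0 n) (Inr {0, i})) -
        int (pos (star_V n) (star_E n) (x0 n) (Inl 0)) - int (pos (star_V n) (star_E n) (x0 n) (Inl i))
        = 2 * int n + int i"
      by (simp add: pos_x0 q0_def)
  qed simp
  also have "\<dots> = int n * (2 * int n) + int (\<Sum>{1..n})"
    by (simp add: sum.distrib of_nat_sum)
  finally have c: "cost (star_V n) (star_E n) (x0 n) = int n * (2 * int n) + int (\<Sum>{1..n})" .
  have g: "2 * int (\<Sum>{1..n}) = int n * (int n + 1)" using gauss2[of n]
    by (metis of_nat_1 of_nat_add of_nat_mult of_nat_numeral)
  show ?thesis unfolding c using g by (simp add: algebra_simps power2_eq_square)
qed

theorem theorem2:
  fixes n :: nat
  assumes "n \<ge> 2"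
  shows "real_of_int (nu_star (star_V n) (star_E n)) = (5 * real n ^ 2 + real n) / 2"
proof -
  define S where "S = {cost (star_V n) (star_E n) x | x. cseq (star_V n) (star_E n) x}"
  have Ssub: "S \<subseteq> {0..5 * int n ^ 2 + int n}"
    using upper cost_nonneg assms unfolding S_def by fastforce
  then have fin: "finite S" using finite_subset by blast
  have mem: "cost (star_V n) (star_E n) (x0 n) \<in> S" unfolding S_def using x0_cseq by blast
  have ub: "c \<le> cost (star_V n) (star_E n) (x0 n)" if cS: "c \<in> S" for c
  proof -
    obtain x where x: "c = cost (star_V n) (star_E n) x" "cseq (star_V n) (star_E n) x"
      using cS unfolding S_def by blast
    have "2 * c \<le> 5 * int n ^ 2 + int n" using upper[OF x(2)] assms x(1) by simp
    then show ?thesis using x0_cost[of n] by simp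
  qed
  have "nu_star (star_V n) (star_E n) = cost (star_V n) (star_E n) (x0 n)"
    unfolding nu_star_def S_def[symmetric] by (rule Max_eqI[OF fin ub mem])
  then have "2 * real_of_int (nu_star (star_V n) (star_E n)) = 5 * real n ^ 2 + real n"
    using arg_cong[OF x0_cost, of real_of_int] by simp
  then show ?thesis by simp
qed

end
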